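(* Let $t$ be a positive integer and $\lambda=\{k_1,\dots,k_q\}$ a multiset of positive integers. Suppose there are $K_t$-minor-free graphs $H_1$ and $H_2$, a clique $K=\{v_1,\dots,v_p\}$ in $H_1$, a $q$-tuple $\mathcal{C}=(C_1,\dots,C_q)$ of pairwise disjoint colour sets, and a $(\lambda,\mathcal{C})$-list assignment $L$ of $H_2$ such that: for every $L$-colouring $\psi$ of $H_2$, there is a $p$-clique $K_\psi=\{v_{\psi,1},\dots,v_{\psi,p}\}$ in $H_2$ such that there exists a $\psi|_{K_\psi}$-obstacle $L_\psi$ for $(H_1,K,\mathcal{C})$ (where $\psi|_{K_\psi}$ is regarded as a proper colouring of the $p$-clique $K_\psi$ with vertices ordered $v_{\psi,1},\dots,v_{\psi,p}$). Then there is a $K_t$-minor-free graph $G$ that is not $\lambda$-choosable.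
   Context: All graphs are finite and simple. A graph is $K_t$-minor-free if $K_t$ cannot be obtained from a subgraph of it by contracting edges. A list assignment $L$ of $G$ assigns to each vertex $v$ a set $L(v)$ of colours; an $L$-colouring is a proper colouring $f$ with $f(v)\in L(v)$ for all $v$. For a multiset $\lambda=\{k_1,\dots,k_q\}$ of positive integers, a $\lambda$-list assignment of $G$ is a list assignment $L$ such that $\bigcup_{v}L(v)$ can be partitioned into $q$ sets $C_1,\dots,C_q$ with $|L(v)\cap C_i|\ge k_i$ for all $i$ and $v$; $G$ is $\lambda$-choosable if it is $L$-colourable for every $\lambda$-list assignment $L$. Given a $q$-tuple $\mathcal{C}=(C_1,\dots,C_q)$ of disjoint colour sets, a $(\lambda,\mathcal{C})$-list assignment of a graph $G$ is a list assignment $L$ with $|L(v)\cap C_i|\ge k_i$ for every vertex $v$ and every $i$. If $K=\{v_1,\dots,v_p\}$ is a clique in $G$, $K'=\{v'_1,\dots,v'_p\}$ is a $p$-clique (disjoint from $G$) and $\psi'$ is a proper colouring of $K'$, then a $(\lambda,\mathcal{C})$-list assignment $L$ of $G$ is a $\psi'$-obstacle for $(G,K,\mathcal{C})$ if the colouring $\psi$ of $K$ given by $\psi(v_i)=\psi'(v'_i)$ is an $L$-colouring of $K$ that cannot be extended to a proper $L$-colouring of $G$. *)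

theory Defs
  imports Main
begin

definition simple_graph :: "'v set \<Rightarrow> ('v \<Rightarrow> 'v \<Rightarrow> bool) \<Rightarrow> bool" where
  "simple_graph V E \<longleftrightarrow> finite V \<and>
     (\<forall>x y. E x y \<longrightarrow> x \<in> V \<and> y \<in> V \<and> x \<noteq> y \<and> E y x)"

definition connected_in :: "'v set \<Rightarrow> ('v \<Rightarrow> 'v \<Rightarrow> bool) \<Rightarrow> 'v set \<Rightarrow> bool" where
  "connected_in V E S \<longleftrightarrow> S \<subseteq> V \<and>
     (\<forall>x\<in>S. \<forall>y\<in>S. (\<lambda>a b. a \<in> S \<and> b \<in> S \<and> E a b)\<^sup>*\<^sup>* x y)"

text \<open>K_t is a minor of G: there are t pairwise disjoint nonempty branch sets,
  each inducing a connected subgraph, and any two of them joined by an edge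
  (equivalently, K_t is obtained from a subgraph by edge contractions).\<close>
definition has_K_minor :: "'v set \<Rightarrow> ('v \<Rightarrow> 'v \<Rightarrow> bool) \<Rightarrow> nat \<Rightarrow> bool" where
  "has_K_minor V E t \<longleftrightarrow> (\<exists>B :: nat \<Rightarrow> 'v set.
     (\<forall>i<t. B i \<noteq> {} \<and> connected_in V E (B i)) \<and>
     (\<forall>i<t. \<forall>j<t. i \<noteq> j \<longrightarrow> B i \<inter> B j = {} \<and> (\<exists>x\<in>B i. \<exists>y\<in>B j. E x y)))"

definition K_minor_free :: "'v set \<Rightarrow> ('v \<Rightarrow> 'v \<Rightarrow> bool) \<Rightarrow> nat \<Rightarrow> bool" where
  "K_minor_free V E t \<longleftrightarrow> \<not> has_K_minor V E t"

definition is_clique :: "'v set \<Rightarrow> ('v \<Rightarrow> 'v \<Rightarrow> bool) \<Rightarrow> 'v list \<Rightarrow> bool" where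
  "is_clique V E K \<longleftrightarrow> distinct K \<and> set K \<subseteq> V \<and>
     (\<forall>i<length K. \<forall>j<length K. i \<noteq> j \<longrightarrow> E (K ! i) (K ! j))"

definition list_assignment :: "'v set \<Rightarrow> ('v \<Rightarrow> 'c set) \<Rightarrow> bool" where
  "list_assignment V L \<longleftrightarrow> (\<forall>v\<in>V. finite (L v))"

definition proper_colouring :: "'v set \<Rightarrow> ('v \<Rightarrow> 'v \<Rightarrow> bool) \<Rightarrow> ('v \<Rightarrow> 'c) \<Rightarrow> bool" where
  "proper_colouring V E f \<longleftrightarrow> (\<forall>x\<in>V. \<forall>y\<in>V. E x y \<longrightarrow> f x \<noteq> f y)"

definition L_colouring :: "'v set \<Rightarrow> ('v \<Rightarrow> 'v \<Rightarrow> bool) \<Rightarrow> ('v \<Rightarrow> 'c set) \<Rightarrow> ('v \<Rightarrow> 'c) \<Rightarrow> bool" where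
  "L_colouring V E L f \<longleftrightarrow> proper_colouring V E f \<and> (\<forall>v\<in>V. f v \<in> L v)"

definition L_colourable :: "'v set \<Rightarrow> ('v \<Rightarrow> 'v \<Rightarrow> bool) \<Rightarrow> ('v \<Rightarrow> 'c set) \<Rightarrow> bool" where
  "L_colourable V E L \<longleftrightarrow> (\<exists>f. L_colouring V E L f)"

text \<open>The multiset lambda = {k_1,...,k_q} is represented by a list ks with q = length ks;
  colour classes are indexed by i < q.\<close>

definition lambda_list_assignment :: "'v set \<Rightarrow> nat list \<Rightarrow> ('v \<Rightarrow> 'c set) \<Rightarrow> bool" where
  "lambda_list_assignment V ks L \<longleftrightarrow> list_assignment V L \<and>
     (\<exists>C :: nat \<Rightarrow> 'c set.
        (\<Union>i<length ks. C i) = (\<Union>v\<in>V. L v) \<and>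
        (\<forall>i<length ks. \<forall>j<length ks. i \<noteq> j \<longrightarrow> C i \<inter> C j = {}) \<and>
        (\<forall>v\<in>V. \<forall>i<length ks. ks ! i \<le> card (L v \<inter> C i)))"

text \<open>lambda-choosability, for lists with colours drawn from the type 'c.\<close>
definition lambda_choosable :: "'c itself \<Rightarrow> 'v set \<Rightarrow> ('v \<Rightarrow> 'v \<Rightarrow> bool) \<Rightarrow> nat list \<Rightarrow> bool" where
  "lambda_choosable _ V E ks \<longleftrightarrow>
     (\<forall>L :: 'v \<Rightarrow> 'c set. lambda_list_assignment V ks L \<longrightarrow> L_colourable V E L)"

definition lambda_C_list_assignment ::
  "'v set \<Rightarrow> nat list \<Rightarrow> (nat \<Rightarrow> 'c set) \<Rightarrow> ('v \<Rightarrow> 'c set) \<Rightarrow> bool" where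
  "lambda_C_list_assignment V ks C L \<longleftrightarrow> list_assignment V L \<and>
     (\<forall>v\<in>V. \<forall>i<length ks. ks ! i \<le> card (L v \<inter> C i))"

text \<open>The clique K = [v_1,...,v_p] of G is a list; a proper colouring psi'
  of the p-clique K' = {v'_1,...,v'_p} is given by its colours psi' i = psi'(v'_{i+1}),
  i < p (proper on a clique = pairwise distinct).\<close>
definition proper_clique_colouring :: "nat \<Rightarrow> (nat \<Rightarrow> 'c) \<Rightarrow> bool" where
  "proper_clique_colouring p psi' \<longleftrightarrow> (\<forall>i<p. \<forall>j<p. i \<noteq> j \<longrightarrow> psi' i \<noteq> psi' j)"

definition obstacle ::
  "'v set \<Rightarrow> ('v \<Rightarrow> 'v \<Rightarrow> bool) \<Rightarrow> 'v list \<Rightarrow> nat list \<Rightarrow> (nat \<Rightarrow> 'c set)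
    \<Rightarrow> (nat \<Rightarrow> 'c) \<Rightarrow> ('v \<Rightarrow> 'c set) \<Rightarrow> bool" where
  "obstacle V E K ks C psi' L \<longleftrightarrow>
     proper_clique_colouring (length K) psi' \<and>
     lambda_C_list_assignment V ks C L \<and>
     (\<forall>i<length K. psi' i \<in> L (K ! i)) \<and>
     (\<forall>i<length K. \<forall>j<length K. E (K ! i) (K ! j) \<longrightarrow> psi' i \<noteq> psi' j) \<and>
     \<not> (\<exists>f. L_colouring V E L f \<and> (\<forall>i<length K. f (K ! i) = psi' i))"

end

theory Submission
  imports Defs "HOL-Library.FuncSet"
begin

lemma reach:
  fixes E E1 E2 :: "'v \<Rightarrow> 'v \<Rightarrow> bool"
  assumes e1: "\<forall>x y. E1 x y \<longrightarrow> x \<in> V1 \<and> y \<in> V1"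
    and e2: "\<forall>x y. E2 x y \<longrightarrow> x \<in> V2 \<and> y \<in> V2"
    and cl: "\<forall>x\<in>V1\<inter>V2. \<forall>y\<in>V1\<inter>V2. x \<noteq> y \<longrightarrow> E1 x y \<and> E2 x y"
    and eq: "\<forall>x y. E x y \<longleftrightarrow> E1 x y \<or> E2 x y"
    and x: "x \<in> B" "x \<in> V1"
    and r: "(\<lambda>a b. a \<in> B \<and> b \<in> B \<and> E a b)\<^sup>*\<^sup>* x y"
  shows "(y \<in> V1 \<longrightarrow> (\<lambda>a b. a \<in> B \<inter> V1 \<and> b \<in> B \<inter> V1 \<and> E1 a b)\<^sup>*\<^sup>* x y) \<and>
         (y \<notin> V1 \<longrightarrow> (\<exists>s\<in>B \<inter> V1 \<inter> V2. (\<lambda>a b. a \<in> B \<inter> V1 \<and> b \<in> B \<inter> V1 \<and> E1 a b)\<^sup>*\<^sup>* x s))"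
  using r
proof (induction rule: rtranclp_induct)
  case base
  then show ?case using x by simp
next
  case (step y z)
  let ?R = "(\<lambda>a b. a \<in> B \<inter> V1 \<and> b \<in> B \<inter> V1 \<and> E1 a b)\<^sup>*\<^sup>*"
  from step.hyps(2) have yB: "y \<in> B" and zB: "z \<in> B" and E: "E1 y z \<or> E2 y z" using eq by auto
  show ?case
  proof (cases "y = z")
    case True
    then show ?thesis using step.IH by simp
  next
    case yz: False
    show ?thesis
    proof (cases "y \<in> V1")
      case yV1: True
      with step.IH have Ry: "?R x y" by blast
      show ?thesis
      proof (cases "z \<in> V1")
        case True
        have "E1 y z"
        proof (cases "E1 y z")
          case False
          then have "E2 y z" using E by blast
          then have "y \<in> V2" "z \<in> V2" using e2 by auto
          then show ?thesis using cl yV1 True yz by blast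
        qed
        then have "?R x z" using Ry yB zB yV1 True
          by (simp add: rtranclp.rtrancl_into_rtrancl)
        then show ?thesis using True by simp
      next
        case False
        then have "E2 y z" using E e1 by blast
        then have "y \<in> V2" using e2 by auto
        then show ?thesis using False Ry yB yV1 by blast
      qed
    next
      case yV1: False
      with step.IH obtain s where s: "s \<in> B \<inter> V1 \<inter> V2" "?R x s" by blast
      have "E2 y z" using E e1 yV1 by blast
      then have zV2: "z \<in> V2" using e2 by auto
      show ?thesis
      proof (cases "z \<in> V1")
        case True
        have "?R x z"
        proof (cases "s = z")
          case False
          then have "E1 s z" using cl s True zV2 by blast
          then show ?thesis using s zB True by (simp add: rtranclp.rtrancl_into_rtrancl)
        qed (use s in simp)
        then show ?thesis using True by simp
      next
        case False
        then show ?thesis using s by blast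
      qed
    qed
  qed
qed

lemma project:
  fixes E E1 E2 :: "'v \<Rightarrow> 'v \<Rightarrow> bool"
  assumes e1: "\<forall>x y. E1 x y \<longrightarrow> x \<in> V1 \<and> y \<in> V1"
    and e2: "\<forall>x y. E2 x y \<longrightarrow> x \<in> V2 \<and> y \<in> V2"
    and cl: "\<forall>x\<in>V1\<inter>V2. \<forall>y\<in>V1\<inter>V2. x \<noteq> y \<longrightarrow> E1 x y \<and> E2 x y"
    and eq: "\<forall>x y. E x y \<longleftrightarrow> E1 x y \<or> E2 x y"
    and B1: "\<forall>i<t. B i \<noteq> {} \<and> connected_in V E (B i)"
    and B2: "\<forall>i<t. \<forall>j<t. i \<noteq> j \<longrightarrow> B i \<inter> B j = {} \<and> (\<exists>x\<in>B i. \<exists>y\<in>B j. E x y)"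
    and B3: "\<forall>i<t. B i \<inter> V1 \<noteq> {}"
  shows "has_K_minor V1 E1 t"
proof -
  have R: "(\<lambda>a b. a \<in> B i \<inter> V1 \<and> b \<in> B i \<inter> V1 \<and> E1 a b)\<^sup>*\<^sup>* x y"
    if "i < t" "x \<in> B i \<inter> V1" "y \<in> B i \<inter> V1" for i x y
  proof -
    have "(\<lambda>a b. a \<in> B i \<and> b \<in> B i \<and> E a b)\<^sup>*\<^sup>* x y"
      using B1 that unfolding connected_in_def by blast
    from reach[OF e1 e2 cl eq _ _ this] that show ?thesis by blast
  qed
  have H: "\<exists>z'\<in>B i \<inter> V1. (z \<in> V1 \<longrightarrow> z' = z) \<and> z' \<in> V2"
    if hz: "i < t" "z \<in> B i" "z \<in> V2" for i z
  proof (cases "z \<in> V1")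
    case True then show ?thesis using hz by blast
  next
    case False
    obtain x where x: "x \<in> B i" "x \<in> V1" using B3 hz by blast
    have "(\<lambda>a b. a \<in> B i \<and> b \<in> B i \<and> E a b)\<^sup>*\<^sup>* x z"
      using B1 hz x unfolding connected_in_def by blast
    from reach[OF e1 e2 cl eq x this] False show ?thesis by blast
  qed
  show ?thesis
    unfolding has_K_minor_def
  proof (intro exI[of _ "\<lambda>i. B i \<inter> V1"] conjI allI impI)
    fix i assume i: "i < t"
    show "B i \<inter> V1 \<noteq> {}" using B3 i by blast
    show "connected_in V1 E1 (B i \<inter> V1)"
      unfolding connected_in_def using R[OF i] by blast
  next
    fix i j assume i: "i < t" and j: "j < t" and ij: "i \<noteq> j"
    show "B i \<inter> V1 \<inter> (B j \<inter> V1) = {}" using B2 i j ij by blast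
    obtain x y where xy: "x \<in> B i" "y \<in> B j" "E x y" using B2 i j ij by blast
    have dis: "B i \<inter> B j = {}" using B2 i j ij by blast
    show "\<exists>x\<in>B i \<inter> V1. \<exists>y\<in>B j \<inter> V1. E1 x y"
    proof (cases "x \<in> V1 \<and> y \<in> V1")
      case True
      have "x \<noteq> y" using dis xy by blast
      then have "E1 x y" using xy eq cl e2 True by blast
      then show ?thesis using True xy by blast
    next
      case False
      then have "E2 x y" using xy eq e1 by blast
      then have "x \<in> V2" "y \<in> V2" using e2 by auto
      obtain x' where x': "x' \<in> B i \<inter> V1" "x' \<in> V2" using H[OF i xy(1) \<open>x \<in> V2\<close>] by blast
      obtain y' where y': "y' \<in> B j \<inter> V1" "y' \<in> V2" using H[OF j xy(2) \<open>y \<in> V2\<close>] by blast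
      have "x' \<noteq> y'" using dis x' y' by blast
      then have "E1 x' y'" using cl x' y' by blast
      then show ?thesis using x' y' by blast
    qed
  qed
qed

lemma clique_sum:
  fixes E1 E2 :: "'v \<Rightarrow> 'v \<Rightarrow> bool"
  assumes e1: "\<forall>x y. E1 x y \<longrightarrow> x \<in> V1 \<and> y \<in> V1"
    and e2: "\<forall>x y. E2 x y \<longrightarrow> x \<in> V2 \<and> y \<in> V2"
    and cl: "\<forall>x\<in>V1\<inter>V2. \<forall>y\<in>V1\<inter>V2. x \<noteq> y \<longrightarrow> E1 x y \<and> E2 x y"
    and f1: "K_minor_free V1 E1 t" and f2: "K_minor_free V2 E2 t"
  shows "K_minor_free (V1 \<union> V2) (\<lambda>x y. E1 x y \<or> E2 x y) t"
proof -
  let ?E = "\<lambda>x y. E1 x y \<or> E2 x y"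
  {
    assume "has_K_minor (V1 \<union> V2) ?E t"
    then obtain B where B1: "\<forall>i<t. B i \<noteq> {} \<and> connected_in (V1 \<union> V2) ?E (B i)"
      and B2: "\<forall>i<t. \<forall>j<t. i \<noteq> j \<longrightarrow> B i \<inter> B j = {} \<and> (\<exists>x\<in>B i. \<exists>y\<in>B j. ?E x y)"
      unfolding has_K_minor_def by blast
    have False
    proof (cases "\<forall>i<t. B i \<inter> V1 \<noteq> {}")
      case True
      have "has_K_minor V1 E1 t"
        by (rule project[OF e1 e2 cl _ B1 B2 True]) simp
      then show False using f1 unfolding K_minor_free_def by blast
    next
      case n1: False
      show False
      proof (cases "\<forall>i<t. B i \<inter> V2 \<noteq> {}")
        case True
        have cl': "\<forall>x\<in>V2\<inter>V1. \<forall>y\<in>V2\<inter>V1. x \<noteq> y \<longrightarrow> E2 x y \<and> E1 x y" using cl by blast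
        have "has_K_minor V2 E2 t"
          by (rule project[OF e2 e1 cl' _ B1 B2 True]) blast
        then show False using f2 unfolding K_minor_free_def by blast
      next
        case False
        then obtain j where j: "j < t" "B j \<inter> V2 = {}" by blast
        from n1 obtain i where i: "i < t" "B i \<inter> V1 = {}" by blast
        have "i \<noteq> j" using B1 i j unfolding connected_in_def by blast
        then obtain x y where "x \<in> B i" "y \<in> B j" "?E x y" using B2 i j by blast
        then show False using e1 e2 i j by blast
      qed
    qed
  }
  then show ?thesis unfolding K_minor_free_def by blast
qed

definition imgE :: "('a \<Rightarrow> 'b) \<Rightarrow> ('a \<Rightarrow> 'a \<Rightarrow> bool) \<Rightarrow> 'b \<Rightarrow> 'b \<Rightarrow> bool" where
  "imgE f E x y \<longleftrightarrow> (\<exists>a b. x = f a \<and> y = f b \<and> E a b)"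

lemma minor_free_image:
  assumes inj: "inj_on f V" and e: "\<forall>a b. E a b \<longrightarrow> a \<in> V \<and> b \<in> V"
    and mf: "K_minor_free V E t"
  shows "K_minor_free (f ` V) (imgE f E) t"
proof -
  let ?g = "inv_into V f"
  {
    assume "has_K_minor (f ` V) (imgE f E) t"
    then obtain B where B1: "\<forall>i<t. B i \<noteq> {} \<and> connected_in (f ` V) (imgE f E) (B i)"
      and B2: "\<forall>i<t. \<forall>j<t. i \<noteq> j \<longrightarrow> B i \<inter> B j = {} \<and> (\<exists>x\<in>B i. \<exists>y\<in>B j. imgE f E x y)"
      unfolding has_K_minor_def by blast
    define B' where "B' i = V \<inter> f -` B i" for i
    have path: "(\<lambda>a b. a \<in> B' i \<and> b \<in> B' i \<and> E a b)\<^sup>*\<^sup>* (?g x) (?g y)"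
      if "(\<lambda>a b. a \<in> B i \<and> b \<in> B i \<and> imgE f E a b)\<^sup>*\<^sup>* x y" for i x y
      using that
    proof (induction rule: rtranclp_induct)
      case (step y z)
      then obtain a b where ab: "y = f a" "z = f b" "E a b" "y \<in> B i" "z \<in> B i"
        unfolding imgE_def by blast
      then have "a \<in> V" "b \<in> V" using e by auto
      then have "?g y = a" "?g z = b" using ab inj by auto
      moreover have "a \<in> B' i" "b \<in> B' i" using ab \<open>a \<in> V\<close> \<open>b \<in> V\<close> B'_def by auto
      ultimately have "(\<lambda>a b. a \<in> B' i \<and> b \<in> B' i \<and> E a b) (?g y) (?g z)"
        using ab by simp
      from rtranclp.rtrancl_into_rtrancl[OF step.IH this] show ?case .
    qed simp
    have "has_K_minor V E t"
      unfolding has_K_minor_def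
    proof (intro exI[of _ B'] conjI allI impI)
      fix i assume i: "i < t"
      have sub: "B i \<subseteq> f ` V" using B1 i unfolding connected_in_def by blast
      obtain x where "x \<in> B i" using B1 i by blast
      then obtain v where "v \<in> V" "f v = x" using sub by blast
      then have "v \<in> B' i" using \<open>x \<in> B i\<close> unfolding B'_def by simp
      then show "B' i \<noteq> {}" by blast
      show "connected_in V E (B' i)"
        unfolding connected_in_def
      proof (intro conjI ballI)
        show "B' i \<subseteq> V" using B'_def by auto
        fix a b assume a: "a \<in> B' i" and b: "b \<in> B' i"
        have "(\<lambda>a b. a \<in> B i \<and> b \<in> B i \<and> imgE f E a b)\<^sup>*\<^sup>* (f a) (f b)"
          using B1 i a b B'_def unfolding connected_in_def by blast
        from path[OF this] have "(\<lambda>x y. x \<in> B' i \<and> y \<in> B' i \<and> E x y)\<^sup>*\<^sup>* (?g (f a)) (?g (f b))" .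
        moreover have "?g (f a) = a" "?g (f b) = b" using a b inj unfolding B'_def by auto
        ultimately show "(\<lambda>x y. x \<in> B' i \<and> y \<in> B' i \<and> E x y)\<^sup>*\<^sup>* a b" by simp
      qed
    next
      fix i j assume i: "i < t" and j: "j < t" and ij: "i \<noteq> j"
      have "B i \<inter> B j = {}" using B2 i j ij by blast
      then show "B' i \<inter> B' j = {}" unfolding B'_def by auto
      obtain x y where "x \<in> B i" "y \<in> B j" "imgE f E x y" using B2 i j ij by blast
      then obtain a b where "x = f a" "y = f b" "E a b" unfolding imgE_def by blast
      moreover have "a \<in> V" "b \<in> V" using e \<open>E a b\<close> by auto
      ultimately have "a \<in> B' i" "b \<in> B' j" using \<open>x \<in> B i\<close> \<open>y \<in> B j\<close> unfolding B'_def by auto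
      then show "\<exists>x\<in>B' i. \<exists>y\<in>B' j. E x y" using \<open>E a b\<close> by blast
    qed
    then have False using mf unfolding K_minor_free_def by blast
  }
  then show ?thesis unfolding K_minor_free_def by blast
qed

lemma simple_image:
  assumes inj: "inj_on f V" and sg: "simple_graph V E"
  shows "simple_graph (f ` V) (imgE f E)"
  unfolding simple_graph_def imgE_def
proof (intro conjI allI impI)
  show "finite (f ` V)" using sg unfolding simple_graph_def by simp
  fix x y assume "\<exists>a b. x = f a \<and> y = f b \<and> E a b"
  then obtain a b where ab: "x = f a" "y = f b" "E a b" by blast
  then have "a \<in> V" "b \<in> V" "a \<noteq> b" "E b a" using sg unfolding simple_graph_def by auto
  then show "x \<in> f ` V" "y \<in> f ` V" "x \<noteq> y" "\<exists>a b. y = f a \<and> x = f b \<and> E a b"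
    using ab inj by (auto dest: inj_onD)
qed

lemma nonchoosable_image:
  fixes E :: "'v \<Rightarrow> 'v \<Rightarrow> bool" and f :: "'v \<Rightarrow> 'w"
  assumes inj: "inj_on f V" and nc: "\<not> lambda_choosable TYPE('c) V E ks"
  shows "\<not> lambda_choosable TYPE('c) (f ` V) (imgE f E) ks"
proof -
  let ?g = "inv_into V f"
  from nc obtain L :: "'v \<Rightarrow> 'c set" where L: "lambda_list_assignment V ks L"
    and nL: "\<not> L_colourable V E L" unfolding lambda_choosable_def by blast
  from L obtain C :: "nat \<Rightarrow> 'c set" where fin: "\<forall>v\<in>V. finite (L v)"
    and C1: "(\<Union>i<length ks. C i) = (\<Union>v\<in>V. L v)"
    and C2: "\<forall>i<length ks. \<forall>j<length ks. i \<noteq> j \<longrightarrow> C i \<inter> C j = {}"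
    and C3: "\<forall>v\<in>V. \<forall>i<length ks. ks ! i \<le> card (L v \<inter> C i)"
    unfolding lambda_list_assignment_def list_assignment_def by blast
  define L' where "L' y = L (?g y)" for y
  have gf: "?g (f v) = v" if "v \<in> V" for v using inj that by auto
  have "lambda_list_assignment (f ` V) ks L'"
    unfolding lambda_list_assignment_def list_assignment_def
  proof (intro conjI exI[of _ C])
    show "\<forall>v\<in>f ` V. finite (L' v)" using fin gf L'_def by auto
    have "(\<Union>v\<in>f ` V. L' v) = (\<Union>v\<in>V. L v)" using gf L'_def by auto
    then show "(\<Union>i<length ks. C i) = (\<Union>v\<in>f ` V. L' v)" using C1 by simp
    show "\<forall>i<length ks. \<forall>j<length ks. i \<noteq> j \<longrightarrow> C i \<inter> C j = {}" by fact
    show "\<forall>v\<in>f ` V. \<forall>i<length ks. ks ! i \<le> card (L' v \<inter> C i)" using C3 gf L'_def by auto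
  qed
  moreover have "\<not> L_colourable (f ` V) (imgE f E) L'"
  proof
    assume "L_colourable (f ` V) (imgE f E) L'"
    then obtain h where h: "L_colouring (f ` V) (imgE f E) L' h" unfolding L_colourable_def by blast
    have "L_colouring V E L (h \<circ> f)"
      unfolding L_colouring_def proper_colouring_def
    proof (intro conjI ballI impI)
      fix x y assume "x \<in> V" "y \<in> V" "E x y"
      then have "imgE f E (f x) (f y)" unfolding imgE_def by blast
      then show "(h \<circ> f) x \<noteq> (h \<circ> f) y" using h \<open>x \<in> V\<close> \<open>y \<in> V\<close>
        unfolding L_colouring_def proper_colouring_def by simp
    next
      fix v assume "v \<in> V"
      then show "(h \<circ> f) v \<in> L v" using h gf unfolding L_colouring_def L'_def by force
    qed
    then show False using nL unfolding L_colourable_def by blast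
  qed
  ultimately show ?thesis unfolding lambda_choosable_def by blast
qed

lemma simple_union:
  assumes "simple_graph V E" "simple_graph V' E'"
  shows "simple_graph (V \<union> V') (\<lambda>x y. E x y \<or> E' x y)"
  using assms unfolding simple_graph_def by blast

theorem lemma2:
  fixes t :: nat and ks :: "nat list"
    and V1 :: "'a set" and E1 :: "'a \<Rightarrow> 'a \<Rightarrow> bool"
    and V2 :: "'b set" and E2 :: "'b \<Rightarrow> 'b \<Rightarrow> bool"
    and K :: "'a list" and C :: "nat \<Rightarrow> 'c set" and L :: "'b \<Rightarrow> 'c set"
  assumes "t \<ge> 1"
    and "\<forall>i<length ks. ks ! i \<ge> 1"
    and "simple_graph V1 E1" and "K_minor_free V1 E1 t"
    and "simple_graph V2 E2" and "K_minor_free V2 E2 t"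
    and "is_clique V1 E1 K"
    and "\<forall>i<length ks. \<forall>j<length ks. i \<noteq> j \<longrightarrow> C i \<inter> C j = {}"
    and "lambda_C_list_assignment V2 ks C L"
    and "\<forall>psi. L_colouring V2 E2 L psi \<longrightarrow>
           (\<exists>Kpsi. is_clique V2 E2 Kpsi \<and> length Kpsi = length K \<and>
              (\<exists>Lpsi. obstacle V1 E1 K ks C (\<lambda>i. psi (Kpsi ! i)) Lpsi))"
  shows "\<exists>(V :: nat set) E. simple_graph V E \<and> K_minor_free V E t \<and>
           \<not> lambda_choosable TYPE('c) V E ks"
proof -
  note sg1 = assms(3) and mf1 = assms(4) and sg2 = assms(5) and mf2 = assms(6)
    and cqK = assms(7) and Cdis = assms(8) and LC = assms(9) and hyp = assms(10)
  define p where "p = length K"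
  define Psi where "Psi = {psi. L_colouring V2 E2 L psi \<and> psi \<in> extensional V2}"
  define Pq where "Pq psi Q \<longleftrightarrow> is_clique V2 E2 Q \<and> length Q = length K \<and>
              (\<exists>Lp. obstacle V1 E1 K ks C (\<lambda>i. psi (Q ! i)) Lp)" for psi Q
  define KQ where "KQ psi = (SOME Q. Pq psi Q)" for psi
  define LP where "LP psi = (SOME Lp. obstacle V1 E1 K ks C (\<lambda>i. psi (KQ psi ! i)) Lp)" for psi
  define phi :: "('b \<Rightarrow> 'c) \<Rightarrow> 'a \<Rightarrow> 'b + (('b \<Rightarrow> 'c) \<times> 'a)" where
    "phi psi a = (case map_of (zip K (KQ psi)) a of Some u \<Rightarrow> Inl u | None \<Rightarrow> Inr (psi, a))" for psi a
  define Vs where "Vs S = Inl ` V2 \<union> (\<Union>psi\<in>S. phi psi ` V1)" for S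
  define Es where "Es S x y \<longleftrightarrow> imgE Inl E2 x y \<or> (\<exists>psi\<in>S. imgE (phi psi) E1 x y)" for S x y
  have finV1: "finite V1" and finV2: "finite V2" using sg1 sg2 unfolding simple_graph_def by auto
  have distK: "distinct K" using cqK unfolding is_clique_def by simp
  have Lfin: "\<forall>v\<in>V2. finite (L v)" using LC unfolding lambda_C_list_assignment_def list_assignment_def by simp
  have finPsi: "finite Psi"
  proof (rule finite_subset)
    show "Psi \<subseteq> Pi\<^sub>E V2 L" unfolding Psi_def L_colouring_def by (auto simp: PiE_iff extensional_def)
    show "finite (Pi\<^sub>E V2 L)" using finV2 Lfin by (intro finite_PiE) auto
  qed
  have KQ: "Pq psi (KQ psi)" if "psi \<in> Psi" for psi
  proof -
    have "\<exists>Q. Pq psi Q" using hyp that unfolding Psi_def Pq_def by blast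
    then show ?thesis unfolding KQ_def by (rule someI_ex)
  qed
  have LP: "obstacle V1 E1 K ks C (\<lambda>i. psi (KQ psi ! i)) (LP psi)" if "psi \<in> Psi" for psi
  proof -
    have "\<exists>Lp. obstacle V1 E1 K ks C (\<lambda>i. psi (KQ psi ! i)) Lp" using KQ[OF that] unfolding Pq_def by blast
    then show ?thesis unfolding LP_def by (rule someI_ex)
  qed
  have cqQ: "is_clique V2 E2 (KQ psi)" and lenQ: "length (KQ psi) = p" if "psi \<in> Psi" for psi
    using KQ[OF that] unfolding Pq_def p_def by auto
  have phiK: "phi psi (K ! i) = Inl (KQ psi ! i)" if "psi \<in> Psi" "i < p" for psi i
    unfolding phi_def using map_of_zip_nth[of K "KQ psi" i] lenQ[OF that(1)] distK that(2) p_def by simp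
  have phiN: "phi psi a = Inr (psi, a)" if "psi \<in> Psi" "a \<notin> set K" for psi a
  proof -
    have "map_of (zip K (KQ psi)) a = None"
      using map_of_zip_is_None[of K "KQ psi" a] lenQ[OF that(1)] that(2) p_def by simp
    then show ?thesis unfolding phi_def by simp
  qed
  have phi_cases: "(\<exists>i<p. a = K ! i \<and> phi psi a = Inl (KQ psi ! i)) \<or> (a \<notin> set K \<and> phi psi a = Inr (psi, a))"
    if "psi \<in> Psi" for psi a
  proof (cases "a \<in> set K")
    case True
    then obtain i where "i < p" "a = K ! i" unfolding p_def by (auto simp: in_set_conv_nth)
    then show ?thesis using phiK[OF that] by blast
  next
    case False then show ?thesis using phiN[OF that] by blast
  qed
  have injphi: "inj_on (phi psi) V1" if psi: "psi \<in> Psi" for psi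
  proof (rule inj_onI)
    fix a b assume "a \<in> V1" "b \<in> V1" and eq: "phi psi a = phi psi b"
    have dQ: "distinct (KQ psi)" using cqQ[OF psi] unfolding is_clique_def by simp
    show "a = b"
      using phi_cases[OF psi, of a] phi_cases[OF psi, of b] eq dQ lenQ[OF psi]
      by (auto simp: nth_eq_iff_index_eq)
  qed
  have sgc: "simple_graph (phi psi ` V1) (imgE (phi psi) E1)" if "psi \<in> Psi" for psi
    by (rule simple_image[OF injphi[OF that] sg1])
  have sgb: "simple_graph (Inl ` V2) (imgE Inl E2)"
    by (rule simple_image[OF _ sg2]) simp
  have e1: "\<forall>a b. E1 a b \<longrightarrow> a \<in> V1 \<and> b \<in> V1" using sg1 unfolding simple_graph_def by blast
  have e2: "\<forall>a b. E2 a b \<longrightarrow> a \<in> V2 \<and> b \<in> V2" using sg2 unfolding simple_graph_def by blast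
  have inter: "\<exists>i<p. x = phi psi (K ! i) \<and> x = Inl (KQ psi ! i)"
    if psi: "psi \<in> Psi" "psi \<notin> S" and S: "S \<subseteq> Psi" and x: "x \<in> phi psi ` V1" "x \<in> Vs S" for psi S x
  proof -
    obtain a where a: "a \<in> V1" "x = phi psi a" using x by blast
    show ?thesis
    proof (cases "a \<in> set K")
      case True
      then show ?thesis using phi_cases[OF psi(1), of a] a by auto
    next
      case False
      then have xr: "x = Inr (psi, a)" using phiN[OF psi(1)] a by simp
      then obtain psi' b where "psi' \<in> S" "x = phi psi' b" using x(2) unfolding Vs_def by auto
      then have "psi' \<in> Psi" using S by blast
      from phi_cases[OF this, of b] \<open>x = phi psi' b\<close> xr have "psi' = psi" by auto
      with \<open>psi' \<in> S\<close> psi(2) show ?thesis by simp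
    qed
  qed
  have ind: "simple_graph (Vs S) (Es S) \<and> K_minor_free (Vs S) (Es S) t" if "finite S" "S \<subseteq> Psi" for S
    using that
  proof (induction S rule: finite_induct)
    case empty
    have "Vs {} = Inl ` V2" "Es {} = imgE Inl E2" unfolding Vs_def Es_def by (auto intro!: ext)
    moreover have "K_minor_free (Inl ` V2) (imgE Inl E2) t"
      by (rule minor_free_image[OF _ e2 mf2]) simp
    ultimately show ?case using sgb by simp
  next
    case (insert psi S)
    have psi: "psi \<in> Psi" and S: "S \<subseteq> Psi" using insert.prems by auto
    from insert.IH S have IH: "simple_graph (Vs S) (Es S)" "K_minor_free (Vs S) (Es S) t" by auto
    have V: "Vs (insert psi S) = phi psi ` V1 \<union> Vs S" unfolding Vs_def by auto
    have E: "Es (insert psi S) = (\<lambda>x y. imgE (phi psi) E1 x y \<or> Es S x y)"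
      unfolding Es_def by (auto intro!: ext)
    have ec: "\<forall>x y. imgE (phi psi) E1 x y \<longrightarrow> x \<in> phi psi ` V1 \<and> y \<in> phi psi ` V1"
      using sgc[OF psi] unfolding simple_graph_def by blast
    have es: "\<forall>x y. Es S x y \<longrightarrow> x \<in> Vs S \<and> y \<in> Vs S"
      using IH(1) unfolding simple_graph_def by blast
    have cl: "\<forall>x\<in>phi psi ` V1 \<inter> Vs S. \<forall>y\<in>phi psi ` V1 \<inter> Vs S. x \<noteq> y \<longrightarrow> imgE (phi psi) E1 x y \<and> Es S x y"
    proof (intro ballI impI)
      fix x y assume x: "x \<in> phi psi ` V1 \<inter> Vs S" and y: "y \<in> phi psi ` V1 \<inter> Vs S" and xy: "x \<noteq> y"
      obtain i where i: "i < p" "x = phi psi (K ! i)" "x = Inl (KQ psi ! i)"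
        using inter[OF psi insert.hyps(2) S, of x] x by blast
      obtain j where j: "j < p" "y = phi psi (K ! j)" "y = Inl (KQ psi ! j)"
        using inter[OF psi insert.hyps(2) S, of y] y by blast
      have ij: "i \<noteq> j" using i j xy by auto
      have "E1 (K ! i) (K ! j)" using cqK i j ij unfolding is_clique_def p_def by blast
      then have "imgE (phi psi) E1 x y" unfolding imgE_def using i j by blast
      moreover have "E2 (KQ psi ! i) (KQ psi ! j)" using cqQ[OF psi] lenQ[OF psi] i j ij
        unfolding is_clique_def by auto
      then have "Es S x y" unfolding Es_def imgE_def using i j by blast
      ultimately show "imgE (phi psi) E1 x y \<and> Es S x y" by blast
    qed
    have mfc: "K_minor_free (phi psi ` V1) (imgE (phi psi) E1) t"
      by (rule minor_free_image[OF injphi[OF psi] e1 mf1])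
    show ?case unfolding V E
      using clique_sum[OF ec es cl mfc IH(2)] simple_union[OF sgc[OF psi] IH(1)] by simp
  qed
  from ind[OF finPsi order_refl] have sgG: "simple_graph (Vs Psi) (Es Psi)"
    and mfG: "K_minor_free (Vs Psi) (Es Psi) t" by auto
  have ncG: "\<not> lambda_choosable TYPE('c) (Vs Psi) (Es Psi) ks"
  proof -
    define CU where "CU = (\<Union>i<length ks. C i)"
    define L0 where "L0 v = (case v of Inl u \<Rightarrow> L u | Inr q \<Rightarrow> LP (fst q) (snd q))" for v
    define Lg where "Lg v = L0 v \<inter> CU" for v
    define U where "U = (\<Union>v\<in>Vs Psi. Lg v)"
    have vcases: "(\<exists>u\<in>V2. v = Inl u) \<or> (\<exists>psi\<in>Psi. \<exists>a\<in>V1. a \<notin> set K \<and> v = Inr (psi, a))"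
      if hv: "v \<in> Vs Psi" for v
    proof -
      { assume "v \<notin> Inl ` V2"
        then obtain psi a where pa: "psi \<in> Psi" "a \<in> V1" "v = phi psi a" using hv unfolding Vs_def by blast
        from phi_cases[OF pa(1), of a] pa have ?thesis
          using cqQ[OF pa(1)] lenQ[OF pa(1)] \<open>v \<notin> Inl ` V2\<close> unfolding is_clique_def
          by (auto simp: set_conv_nth) }
      then show ?thesis by blast
    qed
    have LPC: "lambda_C_list_assignment V1 ks C (LP psi)" if "psi \<in> Psi" for psi
      using LP[OF that] unfolding obstacle_def by blast
    have L0fin: "finite (L0 v)" and L0card: "\<forall>i<length ks. ks ! i \<le> card (L0 v \<inter> C i)"
      if "v \<in> Vs Psi" for v
      using vcases[OF that] LC LPC unfolding L0_def lambda_C_list_assignment_def list_assignment_def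
      by auto
    have "lambda_list_assignment (Vs Psi) ks Lg"
      unfolding lambda_list_assignment_def list_assignment_def
    proof (intro conjI exI[of _ "\<lambda>i. C i \<inter> U"])
      show "\<forall>v\<in>Vs Psi. finite (Lg v)" using L0fin Lg_def by auto
      show "(\<Union>i<length ks. C i \<inter> U) = (\<Union>v\<in>Vs Psi. Lg v)"
        unfolding U_def Lg_def CU_def by blast
      show "\<forall>i<length ks. \<forall>j<length ks. i \<noteq> j \<longrightarrow> C i \<inter> U \<inter> (C j \<inter> U) = {}"
        using Cdis by blast
      show "\<forall>v\<in>Vs Psi. \<forall>i<length ks. ks ! i \<le> card (Lg v \<inter> (C i \<inter> U))"
      proof (intro ballI allI impI)
        fix v i assume v: "v \<in> Vs Psi" and i: "i < length ks"
        have "Lg v \<inter> (C i \<inter> U) = L0 v \<inter> C i"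
          using v i unfolding Lg_def U_def CU_def by blast
        then show "ks ! i \<le> card (Lg v \<inter> (C i \<inter> U))" using L0card[OF v] i by simp
      qed
    qed
    moreover have "\<not> L_colourable (Vs Psi) (Es Psi) Lg"
    proof
      assume "L_colourable (Vs Psi) (Es Psi) Lg"
      then obtain f where f: "L_colouring (Vs Psi) (Es Psi) Lg f" unfolding L_colourable_def by blast
      have fp: "f x \<noteq> f y" if "x \<in> Vs Psi" "y \<in> Vs Psi" "Es Psi x y" for x y
        using f that unfolding L_colouring_def proper_colouring_def by blast
      have fl: "f x \<in> L0 x" if "x \<in> Vs Psi" for x
        using f that unfolding L_colouring_def Lg_def by blast
      define psi0 where "psi0 = restrict (\<lambda>u. f (Inl u)) V2"
      have inl: "Inl u \<in> Vs Psi" if "u \<in> V2" for u using that unfolding Vs_def by blast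
      have "L_colouring V2 E2 L psi0"
        unfolding L_colouring_def proper_colouring_def
      proof (intro conjI ballI impI)
        fix x y assume "x \<in> V2" "y \<in> V2" "E2 x y"
        then have "Es Psi (Inl x) (Inl y)" unfolding Es_def imgE_def by blast
        then show "psi0 x \<noteq> psi0 y" using fp inl \<open>x \<in> V2\<close> \<open>y \<in> V2\<close> psi0_def by simp
      next
        fix v assume "v \<in> V2"
        then show "psi0 v \<in> L v" using fl[OF inl] psi0_def L0_def by simp
      qed
      then have psi0: "psi0 \<in> Psi" unfolding Psi_def psi0_def by simp
      have ob: "obstacle V1 E1 K ks C (\<lambda>i. psi0 (KQ psi0 ! i)) (LP psi0)" by (rule LP[OF psi0])
      define g where "g a = f (phi psi0 a)" for a
      have phiV: "phi psi0 a \<in> Vs Psi" if "a \<in> V1" for a using psi0 that unfolding Vs_def by blast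
      have QV2: "KQ psi0 ! i \<in> V2" if "i < p" for i
        using cqQ[OF psi0] lenQ[OF psi0] that unfolding is_clique_def by auto
      have gK: "g (K ! i) = psi0 (KQ psi0 ! i)" if "i < p" for i
        using phiK[OF psi0 that] QV2[OF that] unfolding g_def psi0_def by simp
      have "L_colouring V1 E1 (LP psi0) g"
        unfolding L_colouring_def proper_colouring_def
      proof (intro conjI ballI impI)
        fix a b assume "a \<in> V1" "b \<in> V1" "E1 a b"
        then have "Es Psi (phi psi0 a) (phi psi0 b)" using psi0 unfolding Es_def imgE_def by blast
        then show "g a \<noteq> g b" using fp phiV \<open>a \<in> V1\<close> \<open>b \<in> V1\<close> g_def by simp
      next
        fix a assume a: "a \<in> V1"
        show "g a \<in> LP psi0 a"
        proof (cases "a \<in> set K")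
          case True
          then obtain i where i: "i < p" "a = K ! i" unfolding p_def by (auto simp: in_set_conv_nth)
          then show ?thesis using gK ob unfolding obstacle_def p_def by auto
        next
          case False
          then show ?thesis using fl[OF phiV[OF a]] phiN[OF psi0 False] unfolding g_def L0_def by simp
        qed
      qed
      moreover have "\<forall>i<length K. g (K ! i) = psi0 (KQ psi0 ! i)" using gK p_def by simp
      ultimately show False using ob unfolding obstacle_def by blast
    qed
    ultimately show ?thesis unfolding lambda_choosable_def by blast
  qed
  obtain h :: "'b + (('b \<Rightarrow> 'c) \<times> 'a) \<Rightarrow> nat" and n where h: "inj_on h (Vs Psi)"
    using finite_imp_inj_to_nat_seg[of "Vs Psi"] sgG unfolding simple_graph_def by blast
  have eG: "\<forall>a b. Es Psi a b \<longrightarrow> a \<in> Vs Psi \<and> b \<in> Vs Psi" using sgG unfolding simple_graph_def by blast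
  show ?thesis
    using simple_image[OF h sgG] minor_free_image[OF h eG mfG] nonchoosable_image[OF h ncG] by blast
qed

end
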